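(* Let $\delta\ge3$ and let $K^{(\delta)}$ be a $\delta$-PHO with potential coefficients $v_h=v^{(\delta)}_h$. Put $V(q)=\tfrac12(q_1^2+q_2^2)+V^{(\delta)}(q)$. There exist real constants $(\alpha,\beta,\beta',\gamma,\gamma')\ne(0,0,0,0,0)$ such that for all $q\in\mathbb R^2$ $$\Big(\tfrac{\partial^2V}{\partial q_2^2}-\tfrac{\partial^2V}{\partial q_1^2}\Big)(-2\alpha q_1q_2-\beta'q_2-\beta q_1+\gamma)+2\tfrac{\partial^2V}{\partial q_1\partial q_2}(\alpha q_2^2-\alpha q_1^2+\beta q_2-\beta'q_1+\gamma')+\tfrac{\partial V}{\partial q_1}(6\alpha q_2+3\beta)-\tfrac{\partial V}{\partial q_2}(6\alpha q_1+3\beta')=0$$ if and only if: (I) for odd $\delta\ge5$: $\operatorname{rank}\mathcal M(K^{(\delta)})=1$; (II) for even $\delta\ge4$: either $\operatorname{rank}\mathcal M(K^{(\delta)})=1$, or $v_0\ne0$, $v_{2h}=\binom{\delta/2}{h}\binom{\delta}{2h}^{-1}v_0$ for $h=1,\dots,\delta/2$, and $v_{2h'-1}=0$ for $h'=1,\dots,\delta/2$; (III) for $\delta=3$: either $\operatorname{rank}\mathcal M(K^{(3)})=1$, or $$\operatorname{rank}\begin{pmatrix}7v_1&-v_0+6v_2&-2v_1+5v_3\\-5v_0+2v_2&-6v_1+v_3&-7v_2\end{pmatrix}=1.$$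
   Context: A $\delta$-PHO is the Hamiltonian $K^{(\delta)}(q,p)=\tfrac12\sum_{j=1}^2(p_j^2+q_j^2)+V^{(\delta)}(q)$ on $\mathbb R^4$, with $V^{(\delta)}(q)=\sum_{h=0}^{\delta}v^{(\delta)}_h\binom{\delta}{h}q_1^hq_2^{\delta-h}$, real coefficients, $V^{(\delta)}\not\equiv0$. $\mathcal M(K^{(\delta)})$ is the $2\times(\delta-1)$ real matrix whose $(h+1)$-st column, $h=0,\dots,\delta-2$, is $\big(v^{(\delta)}_h-v^{(\delta)}_{h+2},\ 2v^{(\delta)}_{h+1}\big)^T$. The displayed identity is the Bertrand–Darboux condition; by the classical Bertrand–Darboux theorem it is equivalent to the existence of a first integral quadratic in the momenta (independent of the Hamiltonian). *)

theory Defs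
  imports "HOL-Analysis.Analysis"
begin

definition hom_pot :: "nat \<Rightarrow> (nat \<Rightarrow> real) \<Rightarrow> real \<Rightarrow> real \<Rightarrow> real" where
  "hom_pot d v q1 q2 = (\<Sum>h=0..d. v h * real (d choose h) * q1 ^ h * q2 ^ (d - h))"

definition full_pot :: "nat \<Rightarrow> (nat \<Rightarrow> real) \<Rightarrow> real \<Rightarrow> real \<Rightarrow> real" where
  "full_pot d v q1 q2 = (q1^2 + q2^2) / 2 + hom_pot d v q1 q2"

definition d1 :: "(real \<Rightarrow> real \<Rightarrow> real) \<Rightarrow> real \<Rightarrow> real \<Rightarrow> real" where
  "d1 f q1 q2 = deriv (\<lambda>x. f x q2) q1"
definition d2 :: "(real \<Rightarrow> real \<Rightarrow> real) \<Rightarrow> real \<Rightarrow> real \<Rightarrow> real" where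
  "d2 f q1 q2 = deriv (\<lambda>y. f q1 y) q2"

text \<open>Rank of a real 2 x n matrix given by its list of columns (column rank).\<close>
definition rank2 :: "(real \<times> real) list \<Rightarrow> nat" where
  "rank2 cols = dim (set cols)"

text \<open>The matrix M(K^(d)): column h+1 (h = 0..d-2) is (v_h - v_{h+2}, 2 v_{h+1}).\<close>
definition Mcols :: "nat \<Rightarrow> (nat \<Rightarrow> real) \<Rightarrow> (real \<times> real) list" where
  "Mcols d v = map (\<lambda>h. (v h - v (h+2), 2 * v (h+1))) [0..<d-1]"

definition M3cols :: "(nat \<Rightarrow> real) \<Rightarrow> (real \<times> real) list" where
  "M3cols v = [(7 * v 1, -5 * v 0 + 2 * v 2), (- v 0 + 6 * v 2, -6 * v 1 + v 3),
               (-2 * v 1 + 5 * v 3, -7 * v 2)]"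

end

theory Submission
  imports Defs
begin

lemma rank2_one:
  "rank2 cols = 1 \<longleftrightarrow>
    ((\<exists>u1 u2::real. (u1, u2) \<noteq> (0, 0) \<and> (\<forall>p\<in>set cols. u1 * fst p + u2 * snd p = 0))
     \<and> (\<exists>p\<in>set cols. p \<noteq> 0))"
proof
  assume h: "rank2 cols = 1"
  hence d1: "dim (set cols) = 1" by (simp add: rank2_def)
  have "\<not> set cols \<subseteq> {0}"
  proof
    assume "set cols \<subseteq> {0}"
    hence "dim (set cols) = 0" by simp
    with d1 show False by simp
  qed
  hence ex: "\<exists>p\<in>set cols. p \<noteq> 0" by auto
  have lt: "dim (set cols) < DIM(real \<times> real)" using d1 by simp
  then obtain x :: "real \<times> real" where x: "x \<noteq> 0" "\<And>y. y \<in> span (set cols) \<Longrightarrow> orthogonal x y"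
    using orthogonal_to_subspace_exists[OF lt] by blast
  have "\<forall>p\<in>set cols. fst x * fst p + snd x * snd p = 0"
  proof
    fix p assume "p \<in> set cols"
    hence "orthogonal x p" using x(2) span_base by blast
    thus "fst x * fst p + snd x * snd p = 0" by (cases x; cases p) (simp add: orthogonal_def)
  qed
  moreover have "(fst x, snd x) \<noteq> (0, 0)" using x(1) by (cases x) (simp add: zero_prod_def)
  ultimately show "((\<exists>u1 u2::real. (u1, u2) \<noteq> (0, 0) \<and> (\<forall>p\<in>set cols. u1 * fst p + u2 * snd p = 0))
     \<and> (\<exists>p\<in>set cols. p \<noteq> 0))" using ex by blast
next
  assume "((\<exists>u1 u2::real. (u1, u2) \<noteq> (0, 0) \<and> (\<forall>p\<in>set cols. u1 * fst p + u2 * snd p = 0))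
     \<and> (\<exists>p\<in>set cols. p \<noteq> 0))"
  then obtain u1 u2 p where u: "(u1, u2) \<noteq> (0::real, 0::real)" "\<forall>p\<in>set cols. u1 * fst p + u2 * snd p = 0"
    and p: "p \<in> set cols" "p \<noteq> 0" by blast
  let ?w = "(-u2, u1)"
  have sub: "set cols \<subseteq> span {?w}"
  proof
    fix q assume q: "q \<in> set cols"
    obtain a b where qab: "q = (a, b)" by (cases q)
    have e: "u1 * a + u2 * b = 0" using u(2) q qab by force
    show "q \<in> span {?w}"
    proof (cases "u1 = 0")
      case True
      hence "u2 \<noteq> 0" using u(1) by simp
      hence "b = 0" using e True by simp
      have "q = (- a / u2) *\<^sub>R ?w" using \<open>b = 0\<close> \<open>u2 \<noteq> 0\<close> True qab by simp
      thus ?thesis by (metis span_base span_scale singletonI)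
    next
      case False
      have a: "a = - u2 * b / u1" using e False by (simp add: field_simps)
      have "q = (b / u1) *\<^sub>R ?w" using False qab a by simp
      thus ?thesis by (metis span_base span_scale singletonI)
    qed
  qed
  have "dim (set cols) \<le> dim (span {?w})" by (rule dim_subset[OF sub])
  also have "\<dots> \<le> 1" by simp
  finally have "dim (set cols) \<le> 1" .
  moreover have "dim (set cols) \<noteq> 0"
  proof
    assume "dim (set cols) = 0"
    hence "set cols \<subseteq> {0}" by simp
    with p show False by auto
  qed
  ultimately show "rank2 cols = 1" unfolding rank2_def by linarith
qed

definition F :: "nat \<Rightarrow> (nat \<Rightarrow> real) \<Rightarrow> real \<Rightarrow> real \<Rightarrow> real" where
  "F n a x y = (\<Sum>h\<le>n. a h * x ^ h * y ^ (n - h))"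

lemma F_dx:
  "((\<lambda>x. F (Suc n) a x y) has_real_derivative F n (\<lambda>h. real (Suc h) * a (Suc h)) x y) (at x)"
proof -
  have "((\<lambda>x. F (Suc n) a x y) has_real_derivative
      (\<Sum>h\<le>Suc n. a h * (real h * x ^ (h - 1)) * y ^ (Suc n - h))) (at x)"
    unfolding F_def
    by (intro DERIV_sum DERIV_cmult DERIV_cmult_right DERIV_pow derivative_eq_intros) auto
  moreover have "(\<Sum>h\<le>Suc n. a h * (real h * x ^ (h - 1)) * y ^ (Suc n - h))
      = F n (\<lambda>h. real (Suc h) * a (Suc h)) x y"
    unfolding F_def by (subst sum.atMost_Suc_shift) (simp add: algebra_simps)
  ultimately show ?thesis by simp
qed

lemma F_dy:
  "((\<lambda>y. F (Suc n) a x y) has_real_derivative F n (\<lambda>h. real (Suc n - h) * a h) x y) (at y)"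
proof -
  have "((\<lambda>y. F (Suc n) a x y) has_real_derivative
      (\<Sum>h\<le>Suc n. a h * x ^ h * (real (Suc n - h) * y ^ (Suc n - h - 1)))) (at y)"
    unfolding F_def
    by (intro DERIV_sum DERIV_cmult DERIV_pow derivative_eq_intros) auto
  moreover have "(\<Sum>h\<le>Suc n. a h * x ^ h * (real (Suc n - h) * y ^ (Suc n - h - 1)))
      = F n (\<lambda>h. real (Suc n - h) * a h) x y"
    unfolding F_def
    by (subst sum.atMost_Suc) (auto simp: algebra_simps Suc_diff_le intro!: sum.cong)
  ultimately show ?thesis by simp
qed

lemma F_scale: "F n a (t * x) (t * y) = t ^ n * F n a x y"
  unfolding F_def sum_distrib_left
proof (rule sum.cong)
  fix h assume "h \<in> {..n}"
  hence "t ^ n = t ^ h * t ^ (n - h)" by (simp add: power_add[symmetric])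
  thus "a h * (t * x) ^ h * (t * y) ^ (n - h) = t ^ n * (a h * x ^ h * y ^ (n - h))"
    by (simp add: power_mult_distrib)
qed simp

lemma F_zero:
  assumes "\<forall>x y. F n a x y = 0" "h \<le> n"
  shows "a h = 0"
proof -
  have "\<forall>x. (\<Sum>i\<le>n. a i * x ^ i) = 0"
  proof
    fix x have "F n a x 1 = 0" using assms(1) by blast
    thus "(\<Sum>i\<le>n. a i * x ^ i) = 0" by (simp add: F_def)
  qed
  thus ?thesis using polyfun_eq_0 assms(2) by blast
qed

lemma F_euler:
  "x * F n (\<lambda>h. real (Suc h) * a (Suc h)) x y + y * F n (\<lambda>h. real (Suc n - h) * a h) x y
   = real (Suc n) * F (Suc n) a x y"
proof -
  have 1: "x * F n (\<lambda>h. real (Suc h) * a (Suc h)) x y = (\<Sum>h\<le>Suc n. real h * a h * x ^ h * y ^ (Suc n - h))"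
    unfolding F_def sum_distrib_left
    by (subst sum.atMost_Suc_shift) (simp add: algebra_simps)
  have 2: "y * F n (\<lambda>h. real (Suc n - h) * a h) x y = (\<Sum>h\<le>Suc n. real (Suc n - h) * a h * x ^ h * y ^ (Suc n - h))"
    unfolding F_def sum_distrib_left
    by (subst sum.atMost_Suc) (auto simp: algebra_simps Suc_diff_le intro!: sum.cong)
  have 3: "(\<Sum>h\<le>Suc n. real h * a h * x ^ h * y ^ (Suc n - h)) + (\<Sum>h\<le>Suc n. real (Suc n - h) * a h * x ^ h * y ^ (Suc n - h))
     = (\<Sum>h\<le>Suc n. real (Suc n) * (a h * x ^ h * y ^ (Suc n - h)))"
    unfolding sum.distrib[symmetric]
  proof (rule sum.cong)
    fix h assume "h \<in> {..Suc n}"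
    hence "real h + real (Suc n - h) = real (Suc n)" by auto
    thus "real h * a h * x ^ h * y ^ (Suc n - h) + real (Suc n - h) * a h * x ^ h * y ^ (Suc n - h) =
         real (Suc n) * (a h * x ^ h * y ^ (Suc n - h))"
      by (metis (no_types, opaque_lifting) distrib_right mult.assoc)
  qed simp
  show ?thesis unfolding 1 2 3 by (simp only: F_def sum_distrib_left)
qed

lemma F_xshift: "x * F n a x y = F (Suc n) (\<lambda>k. if k = 0 then 0 else a (k - 1)) x y"
  unfolding F_def sum_distrib_left
  by (subst sum.atMost_Suc_shift) (simp add: algebra_simps)

lemma F_yshift: "y * F n a x y = F (Suc n) (\<lambda>k. if k = Suc n then 0 else a k) x y"
  unfolding F_def sum_distrib_left
  by (subst sum.atMost_Suc) (auto simp: algebra_simps Suc_diff_le intro!: sum.cong)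

lemma F_add: "F n a x y + F n b x y = F n (\<lambda>h. a h + b h) x y"
  unfolding F_def by (simp add: sum.distrib algebra_simps)
lemma F_diff: "F n a x y - F n b x y = F n (\<lambda>h. a h - b h) x y"
  unfolding F_def by (simp add: sum_subtractf algebra_simps)
lemma F_cmult: "s * F n a x y = F n (\<lambda>h. s * a h) x y"
  unfolding F_def by (simp add: sum_distrib_left algebra_simps)

definition cc :: "nat \<Rightarrow> (nat \<Rightarrow> real) \<Rightarrow> nat \<Rightarrow> real" where
  "cc d v h = v h * real (d choose h)"
definition a1 :: "nat \<Rightarrow> (nat \<Rightarrow> real) \<Rightarrow> nat \<Rightarrow> real" where
  "a1 n v h = real (Suc h) * cc (Suc (Suc n)) v (Suc h)"
definition b1 :: "nat \<Rightarrow> (nat \<Rightarrow> real) \<Rightarrow> nat \<Rightarrow> real" where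
  "b1 n v h = real (Suc (Suc n) - h) * cc (Suc (Suc n)) v h"
definition a11 :: "nat \<Rightarrow> (nat \<Rightarrow> real) \<Rightarrow> nat \<Rightarrow> real" where
  "a11 n v h = real (Suc h) * a1 n v (Suc h)"
definition a12 :: "nat \<Rightarrow> (nat \<Rightarrow> real) \<Rightarrow> nat \<Rightarrow> real" where
  "a12 n v h = real (Suc n - h) * a1 n v h"
definition a22 :: "nat \<Rightarrow> (nat \<Rightarrow> real) \<Rightarrow> nat \<Rightarrow> real" where
  "a22 n v h = real (Suc n - h) * b1 n v h"

lemma hom_pot_F: "hom_pot d v x y = F d (cc d v) x y"
  unfolding hom_pot_def F_def cc_def by (simp add: atLeast0AtMost)

lemma d1V: "d1 (full_pot (Suc (Suc n)) v) = (\<lambda>x y. x + F (Suc n) (a1 n v) x y)"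
proof (intro ext)
  fix x y
  have h1: "((\<lambda>x. (x^2 + y^2) / 2) has_real_derivative x) (at x)"
    by (auto intro!: derivative_eq_intros)
  have h2: "((\<lambda>x. F (Suc (Suc n)) (cc (Suc (Suc n)) v) x y) has_real_derivative F (Suc n) (a1 n v) x y) (at x)"
    using F_dx[of "Suc n" "cc (Suc (Suc n)) v" y x] by (simp add: a1_def[abs_def])
  have "((\<lambda>x. full_pot (Suc (Suc n)) v x y) has_real_derivative x + F (Suc n) (a1 n v) x y) (at x)"
    unfolding full_pot_def hom_pot_F using DERIV_add[OF h1 h2] by simp
  thus "d1 (full_pot (Suc (Suc n)) v) x y = x + F (Suc n) (a1 n v) x y"
    unfolding d1_def by (rule DERIV_imp_deriv)
qed

lemma d2V: "d2 (full_pot (Suc (Suc n)) v) = (\<lambda>x y. y + F (Suc n) (b1 n v) x y)"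
proof (intro ext)
  fix x y
  have h1: "((\<lambda>y. (x^2 + y^2) / 2) has_real_derivative y) (at y)"
    by (auto intro!: derivative_eq_intros)
  have h2: "((\<lambda>y. F (Suc (Suc n)) (cc (Suc (Suc n)) v) x y) has_real_derivative F (Suc n) (b1 n v) x y) (at y)"
    using F_dy[of "Suc n" "cc (Suc (Suc n)) v" x y] by (simp add: b1_def[abs_def])
  have "((\<lambda>y. full_pot (Suc (Suc n)) v x y) has_real_derivative y + F (Suc n) (b1 n v) x y) (at y)"
    unfolding full_pot_def hom_pot_F using DERIV_add[OF h1 h2] by simp
  thus "d2 (full_pot (Suc (Suc n)) v) x y = y + F (Suc n) (b1 n v) x y"
    unfolding d2_def by (rule DERIV_imp_deriv)
qed

lemma d11V: "d1 (d1 (full_pot (Suc (Suc n)) v)) x y = 1 + F n (a11 n v) x y"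
proof -
  have h1: "((\<lambda>x. x) has_real_derivative 1) (at x)" by (rule DERIV_ident)
  have h2: "((\<lambda>x. F (Suc n) (a1 n v) x y) has_real_derivative F n (a11 n v) x y) (at x)"
    using F_dx[of n "a1 n v" y x] by (simp add: a11_def[abs_def])
  show ?thesis unfolding d1V unfolding d1_def using DERIV_add[OF h1 h2] by (rule DERIV_imp_deriv)
qed

lemma d22V: "d2 (d2 (full_pot (Suc (Suc n)) v)) x y = 1 + F n (a22 n v) x y"
proof -
  have h1: "((\<lambda>y. y) has_real_derivative 1) (at y)" by (rule DERIV_ident)
  have h2: "((\<lambda>y. F (Suc n) (b1 n v) x y) has_real_derivative F n (a22 n v) x y) (at y)"
    using F_dy[of n "b1 n v" x y] by (simp add: a22_def[abs_def])
  show ?thesis unfolding d2V unfolding d2_def using DERIV_add[OF h1 h2] by (rule DERIV_imp_deriv)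
qed

lemma d21V: "d2 (d1 (full_pot (Suc (Suc n)) v)) x y = F n (a12 n v) x y"
proof -
  have h1: "((\<lambda>y. x) has_real_derivative 0) (at y)" by (rule DERIV_const)
  have h2: "((\<lambda>y. F (Suc n) (a1 n v) x y) has_real_derivative F n (a12 n v) x y) (at y)"
    using F_dy[of n "a1 n v" x y] by (simp add: a12_def[abs_def])
  show ?thesis unfolding d1V unfolding d2_def using DERIV_add[OF h1 h2] DERIV_imp_deriv by fastforce
qed

lemma euler1: "x * F n (a11 n v) x y + y * F n (a12 n v) x y = real (Suc n) * F (Suc n) (a1 n v) x y"
  using F_euler[of x n "a1 n v" y] by (simp add: a11_def[abs_def] a12_def[abs_def])

lemma euler2: "x * F n (a12 n v) x y + y * F n (a22 n v) x y = real (Suc n) * F (Suc n) (b1 n v) x y"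
proof -
  have "(\<lambda>h. real (Suc h) * b1 n v (Suc h)) = a12 n v"
    by (simp add: fun_eq_iff a12_def a1_def b1_def)
  moreover have "(\<lambda>h. real (Suc n - h) * b1 n v h) = a22 n v"
    by (simp add: fun_eq_iff a22_def)
  ultimately show ?thesis using F_euler[of x n "b1 n v" y] by simp
qed

definition Aexp :: "nat \<Rightarrow> (nat \<Rightarrow> real) \<Rightarrow> real \<Rightarrow> real \<Rightarrow> real \<Rightarrow> real" where
  "Aexp n v \<alpha> x y = (F n (a22 n v) x y - F n (a11 n v) x y) * (-2*\<alpha>*x*y)
     + 2 * F n (a12 n v) x y * (\<alpha>*y^2 - \<alpha>*x^2)
     + F (Suc n) (a1 n v) x y * (6*\<alpha>*y) - F (Suc n) (b1 n v) x y * (6*\<alpha>*x)"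
definition Bexp :: "nat \<Rightarrow> (nat \<Rightarrow> real) \<Rightarrow> real \<Rightarrow> real \<Rightarrow> real \<Rightarrow> real \<Rightarrow> real" where
  "Bexp n v \<beta> \<beta>' x y = (F n (a22 n v) x y - F n (a11 n v) x y) * (-\<beta>'*y - \<beta>*x)
     + 2 * F n (a12 n v) x y * (\<beta>*y - \<beta>'*x)
     + F (Suc n) (a1 n v) x y * (3*\<beta>) - F (Suc n) (b1 n v) x y * (3*\<beta>')"
definition Gexp :: "nat \<Rightarrow> (nat \<Rightarrow> real) \<Rightarrow> real \<Rightarrow> real \<Rightarrow> real \<Rightarrow> real \<Rightarrow> real" where
  "Gexp n v \<gamma> \<gamma>' x y = (F n (a22 n v) x y - F n (a11 n v) x y) * \<gamma> + 2 * F n (a12 n v) x y * \<gamma>'"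
definition Lexp :: "real \<Rightarrow> real \<Rightarrow> real \<Rightarrow> real \<Rightarrow> real" where
  "Lexp \<beta> \<beta>' x y = 3*\<beta>*x - 3*\<beta>'*y"

lemma E_split:
  fixes n :: nat and v :: "nat \<Rightarrow> real" and \<alpha> \<beta> \<beta>' \<gamma> \<gamma>' :: real
  defines "V \<equiv> full_pot (Suc (Suc n)) v"
  shows "(d2 (d2 V) q1 q2 - d1 (d1 V) q1 q2) * (-2*\<alpha>*q1*q2 - \<beta>'*q2 - \<beta>*q1 + \<gamma>)
        + 2 * d2 (d1 V) q1 q2 * (\<alpha>*q2^2 - \<alpha>*q1^2 + \<beta>*q2 - \<beta>'*q1 + \<gamma>')
        + d1 V q1 q2 * (6*\<alpha>*q2 + 3*\<beta>) - d2 V q1 q2 * (6*\<alpha>*q1 + 3*\<beta>')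
   = Aexp n v \<alpha> q1 q2 + Bexp n v \<beta> \<beta>' q1 q2 + Gexp n v \<gamma> \<gamma>' q1 q2 + Lexp \<beta> \<beta>' q1 q2"
  unfolding V_def d11V d22V d21V unfolding d1V d2V Aexp_def Bexp_def Gexp_def Lexp_def
  by (simp add: algebra_simps)

lemma A_scale: "Aexp n v \<alpha> (t*x) (t*y) = t^(n+2) * Aexp n v \<alpha> x y"
  unfolding Aexp_def F_scale by (simp add: algebra_simps power2_eq_square)
lemma B_scale: "Bexp n v \<beta> \<beta>' (t*x) (t*y) = t^(n+1) * Bexp n v \<beta> \<beta>' x y"
  unfolding Bexp_def F_scale by (simp add: algebra_simps)
lemma G_scale: "Gexp n v \<gamma> \<gamma>' (t*x) (t*y) = t^n * Gexp n v \<gamma> \<gamma>' x y"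
  unfolding Gexp_def F_scale by (simp add: algebra_simps)
lemma L_scale: "Lexp \<beta> \<beta>' (t*x) (t*y) = t * Lexp \<beta> \<beta>' x y"
  unfolding Lexp_def by (simp add: algebra_simps)

lemma poly_sep:
  fixes A B G L :: real
  assumes h: "\<forall>t. t^(n+2)*A + t^(n+1)*B + t^n*G + t*L = 0" and n: "n \<ge> 1"
  shows "A = 0 \<and> B = 0 \<and> (if n = 1 then G + L = 0 else G = 0 \<and> L = 0)"
proof -
  define co where "co i = (if i = n+2 then A else 0) + (if i = n+1 then B else 0)
     + (if i = n then G else 0) + (if i = 1 then L else 0)" for i
  have "\<forall>t. (\<Sum>i\<le>n+2. co i * t^i) = 0"
  proof
    fix t :: real
    have "(\<Sum>i\<le>n+2. co i * t^i) = (\<Sum>i\<le>n+2. (if i = n+2 then A * t^(n+2) else 0))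
       + (\<Sum>i\<le>n+2. (if i = n+1 then B * t^(n+1) else 0))
       + (\<Sum>i\<le>n+2. (if i = n then G * t^n else 0))
       + (\<Sum>i\<le>n+2. (if i = 1 then L * t else 0))"
      unfolding sum.distrib[symmetric] by (rule sum.cong) (auto simp: co_def algebra_simps)
    also have "\<dots> = t^(n+2)*A + t^(n+1)*B + t^n*G + t*L"
      using n by (simp add: sum.delta algebra_simps)
    finally show "(\<Sum>i\<le>n+2. co i * t^i) = 0" using h by simp
  qed
  hence z: "\<forall>i\<le>n+2. co i = 0" using polyfun_eq_0 by blast
  have "co (n+2) = 0" "co (n+1) = 0" "co n = 0" "co 1 = 0" using z n by auto
  thus ?thesis using n unfolding co_def by (auto split: if_splits)
qed

lemma E_zero_iff:
  fixes \<alpha> \<beta> \<beta>' \<gamma> \<gamma>' :: real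
  assumes n: "n \<ge> 1"
  shows "(\<forall>x y. Aexp n v \<alpha> x y + Bexp n v \<beta> \<beta>' x y + Gexp n v \<gamma> \<gamma>' x y + Lexp \<beta> \<beta>' x y = 0)
    \<longleftrightarrow> (\<forall>x y. Aexp n v \<alpha> x y = 0) \<and> (\<forall>x y. Bexp n v \<beta> \<beta>' x y = 0) \<and>
        (if n = 1 then (\<forall>x y. Gexp n v \<gamma> \<gamma>' x y + Lexp \<beta> \<beta>' x y = 0)
         else (\<forall>x y. Gexp n v \<gamma> \<gamma>' x y = 0) \<and> (\<forall>x y. Lexp \<beta> \<beta>' x y = 0))"
    (is "?L \<longleftrightarrow> ?R")
proof
  assume L: ?L
  have "\<forall>x y. Aexp n v \<alpha> x y = 0 \<and> Bexp n v \<beta> \<beta>' x y = 0 \<and>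
     (if n = 1 then Gexp n v \<gamma> \<gamma>' x y + Lexp \<beta> \<beta>' x y = 0
      else Gexp n v \<gamma> \<gamma>' x y = 0 \<and> Lexp \<beta> \<beta>' x y = 0)"
  proof (intro allI)
    fix x y
    have "\<forall>t. t^(n+2)*Aexp n v \<alpha> x y + t^(n+1)*Bexp n v \<beta> \<beta>' x y + t^n*Gexp n v \<gamma> \<gamma>' x y + t*Lexp \<beta> \<beta>' x y = 0"
    proof
      fix t
      have "Aexp n v \<alpha> (t*x) (t*y) + Bexp n v \<beta> \<beta>' (t*x) (t*y) + Gexp n v \<gamma> \<gamma>' (t*x) (t*y) + Lexp \<beta> \<beta>' (t*x) (t*y) = 0"
        using L by blast
      thus "t^(n+2)*Aexp n v \<alpha> x y + t^(n+1)*Bexp n v \<beta> \<beta>' x y + t^n*Gexp n v \<gamma> \<gamma>' x y + t*Lexp \<beta> \<beta>' x y = 0"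
        unfolding A_scale B_scale G_scale L_scale .
    qed
    from poly_sep[OF this n] show "Aexp n v \<alpha> x y = 0 \<and> Bexp n v \<beta> \<beta>' x y = 0 \<and>
     (if n = 1 then Gexp n v \<gamma> \<gamma>' x y + Lexp \<beta> \<beta>' x y = 0
      else Gexp n v \<gamma> \<gamma>' x y = 0 \<and> Lexp \<beta> \<beta>' x y = 0)" .
  qed
  thus ?R by (auto split: if_splits)
next
  assume ?R thus ?L by (auto split: if_splits)
qed

definition rco :: "nat \<Rightarrow> (nat \<Rightarrow> real) \<Rightarrow> nat \<Rightarrow> real" where
  "rco n v k = (if k = 0 then 0 else b1 n v (k - 1)) - (if k = Suc (Suc n) then 0 else a1 n v k)"

lemma A_R: "Aexp n v \<alpha> x y = -2 * (real n + 4) * \<alpha> * F (Suc (Suc n)) (rco n v) x y"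
proof -
  have R: "F (Suc (Suc n)) (rco n v) x y = x * F (Suc n) (b1 n v) x y - y * F (Suc n) (a1 n v) x y"
    unfolding F_xshift F_yshift F_diff rco_def ..
  have "Aexp n v \<alpha> x y = \<alpha> * (2*y*(x * F n (a11 n v) x y + y * F n (a12 n v) x y)
      - 2*x*(x * F n (a12 n v) x y + y * F n (a22 n v) x y)
      + 6*y*F (Suc n) (a1 n v) x y - 6*x*F (Suc n) (b1 n v) x y)"
    unfolding Aexp_def by (simp add: algebra_simps power2_eq_square)
  also have "\<dots> = \<alpha> * (2*y*(real (Suc n) * F (Suc n) (a1 n v) x y)
      - 2*x*(real (Suc n) * F (Suc n) (b1 n v) x y)
      + 6*y*F (Suc n) (a1 n v) x y - 6*x*F (Suc n) (b1 n v) x y)"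
    unfolding euler1 euler2 ..
  also have "\<dots> = -2 * (real n + 4) * \<alpha> * F (Suc (Suc n)) (rco n v) x y"
    unfolding R by (simp add: algebra_simps)
  finally show ?thesis .
qed

lemma F_cong: "(\<And>h. h \<le> n \<Longrightarrow> a h = b h) \<Longrightarrow> F n a x y = F n b x y"
  unfolding F_def by (rule sum.cong) auto

lemma F_zero_iff: "(\<forall>x y. F n a x y = 0) \<longleftrightarrow> (\<forall>h\<le>n. a h = 0)"
proof
  assume "\<forall>x y. F n a x y = 0" thus "\<forall>h\<le>n. a h = 0" using F_zero by blast
next
  assume "\<forall>h\<le>n. a h = 0" thus "\<forall>x y. F n a x y = 0" unfolding F_def by simp
qed

lemma bI1: "h \<le> n \<Longrightarrow> (Suc n - h) * ((Suc (Suc n) - h) * (Suc (Suc n) choose h)) = (n+2)*(n+1)*(n choose h)"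
proof -
  assume "h \<le> n"
  have e1: "(Suc (Suc n) - h) * (Suc (Suc n) choose h) = Suc (Suc n) * (Suc n choose h)"
    using binomial_absorb_comp[of "Suc (Suc n)" h] by simp
  have e2: "(Suc n - h) * (Suc n choose h) = Suc n * (n choose h)"
    using binomial_absorb_comp[of "Suc n" h] by simp
  have "(Suc n - h) * ((Suc (Suc n) - h) * (Suc (Suc n) choose h)) = Suc (Suc n) * ((Suc n - h) * (Suc n choose h))"
    unfolding e1 by (rule mult.left_commute)
  also have "\<dots> = (n+2)*(n+1)*(n choose h)" unfolding e2 by (simp add: algebra_simps)
  finally show ?thesis .
qed

lemma bI2: "Suc h * (Suc (Suc h) * (Suc (Suc n) choose Suc (Suc h))) = (n+2)*(n+1)*(n choose h)"
proof -
  have e1: "Suc (Suc h) * (Suc (Suc n) choose Suc (Suc h)) = Suc (Suc n) * (Suc n choose Suc h)"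
    using binomial_absorption[of "Suc h" "Suc (Suc n)"] by simp
  have e2: "Suc h * (Suc n choose Suc h) = Suc n * (n choose h)"
    using binomial_absorption[of h "Suc n"] by simp
  show ?thesis unfolding e1
    by (metis (no_types, lifting) e2 add_2_eq_Suc' add_Suc_right Suc_eq_plus1 mult.assoc mult.left_commute)
qed

lemma bI3: "h \<le> n \<Longrightarrow> (Suc n - h) * (Suc h * (Suc (Suc n) choose Suc h)) = (n+2)*(n+1)*(n choose h)"
proof -
  assume "h \<le> n"
  have e1: "Suc h * (Suc (Suc n) choose Suc h) = Suc (Suc n) * (Suc n choose h)"
    using binomial_absorption[of h "Suc (Suc n)"] by simp
  have e2: "(Suc n - h) * (Suc n choose h) = Suc n * (n choose h)"
    using binomial_absorb_comp[of "Suc n" h] by simp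
  show ?thesis unfolding e1
    by (metis (no_types, lifting) e2 add_2_eq_Suc' add_Suc_right Suc_eq_plus1 mult.assoc mult.left_commute)
qed

definition Kf :: "nat \<Rightarrow> nat \<Rightarrow> real" where "Kf n h = real ((n+2)*(n+1)*(n choose h))"

lemma G_F: "Gexp n v \<gamma> \<gamma>' x y = F n (\<lambda>h. Kf n h * (\<gamma>*(v h - v (h+2)) + \<gamma>'*(2* v (h+1)))) x y"
proof -
  have "Gexp n v \<gamma> \<gamma>' x y = F n (\<lambda>h. (a22 n v h - a11 n v h) * \<gamma> + 2 * a12 n v h * \<gamma>') x y"
    unfolding Gexp_def F_def by (simp add: algebra_simps sum.distrib sum_subtractf sum_distrib_left sum_distrib_right)
  also have "\<dots> = F n (\<lambda>h. Kf n h * (\<gamma>*(v h - v (h+2)) + \<gamma>'*(2* v (h+1)))) x y"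
  proof (rule F_cong)
    fix h assume h: "h \<le> n"
    have e1: "real (Suc n - h) * (real (Suc (Suc n) - h) * real (Suc (Suc n) choose h)) = Kf n h"
      unfolding Kf_def using bI1[OF h] by (metis of_nat_mult)
    have 1: "a22 n v h = Kf n h * v h"
      unfolding a22_def b1_def cc_def e1[symmetric] by (simp only: mult_ac)
    have e2: "real (Suc h) * (real (Suc (Suc h)) * real (Suc (Suc n) choose Suc (Suc h))) = Kf n h"
      unfolding Kf_def using bI2[of h n] by (metis of_nat_mult)
    have 2: "a11 n v h = Kf n h * v (Suc (Suc h))"
      unfolding a11_def a1_def cc_def e2[symmetric] by (simp only: mult_ac)
    have e3: "real (Suc n - h) * (real (Suc h) * real (Suc (Suc n) choose Suc h)) = Kf n h"
      unfolding Kf_def using bI3[OF h] by (metis of_nat_mult)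
    have 3: "a12 n v h = Kf n h * v (Suc h)"
      unfolding a12_def a1_def cc_def e3[symmetric] by (simp only: mult_ac)
    show "(a22 n v h - a11 n v h) * \<gamma> + 2 * a12 n v h * \<gamma>' = Kf n h * (\<gamma>*(v h - v (h+2)) + \<gamma>'*(2* v (h+1)))"
      unfolding 1 2 3 by (simp add: algebra_simps)
  qed
  finally show ?thesis .
qed

lemma G_zero_iff: "(\<forall>x y. Gexp n v \<gamma> \<gamma>' x y = 0) \<longleftrightarrow> (\<forall>h\<le>n. \<gamma>*(v h - v (h+2)) + \<gamma>'*(2* v (h+1)) = 0)"
proof -
  have K: "Kf n h \<noteq> 0" if hn: "h \<le> n" for h
  proof -
    have "(n choose h) \<noteq> 0" using hn by simp
    hence "(n+2)*(n+1)*(n choose h) \<noteq> 0" by simp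
    thus ?thesis unfolding Kf_def by (metis of_nat_eq_0_iff)
  qed
  show ?thesis unfolding G_F F_zero_iff using K by auto
qed

lemma seq_odd:
  fixes c :: "nat \<Rightarrow> real"
  assumes h1: "c 1 = 0" and hrec: "\<And>j. j+2 \<le> d \<Longrightarrow> real (d-j) * c j = real (j+2) * c (j+2)"
    and hout: "\<And>k. d < k \<Longrightarrow> c k = 0"
  shows "c (2*i+1) = 0"
proof (induction i)
  case 0 thus ?case using h1 by simp
next
  case (Suc i)
  show ?case
  proof (cases "2*i+3 \<le> d")
    case True
    have "real (d-(2*i+1)) * c (2*i+1) = real (2*i+1+2) * c (2*i+1+2)" using hrec[of "2*i+1"] True by simp
    hence "real (2*i+3) * c (2*i+3) = 0" using Suc.IH by (simp add: numeral_3_eq_3)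
    hence "c (2*i+3) = 0" by simp
    thus ?thesis by (simp add: numeral_3_eq_3)
  next
    case False thus ?thesis using hout by simp
  qed
qed

lemma seq_even0:
  fixes c :: "nat \<Rightarrow> real"
  assumes hrec: "\<And>j. j+2 \<le> d \<Longrightarrow> real (d-j) * c j = real (j+2) * c (j+2)"
  shows "2*i \<le> d \<Longrightarrow> (c (2*i) = 0 \<longleftrightarrow> c 0 = 0)"
proof (induction i)
  case 0 thus ?case by simp
next
  case (Suc i)
  hence le: "2*i+2 \<le> d" by simp
  have e: "real (d-2*i) * c (2*i) = real (2*i+2) * c (2*i+2)" using hrec[OF le] .
  have nz: "real (d-2*i) \<noteq> 0" using le by simp
  have "c (2*i+2) = 0 \<longleftrightarrow> c (2*i) = 0"
  proof
    assume "c (2*i+2) = 0" thus "c (2*i) = 0" using e nz by simp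
  next
    assume "c (2*i) = 0" thus "c (2*i+2) = 0" using e by simp
  qed
  thus ?case using Suc le by simp
qed

lemma binom_step: "real (Suc i) * real (m choose Suc i) = real (m - i) * real (m choose i)"
proof -
  have "Suc i * (m choose Suc i) = (m - i) * (m choose i)"
    using binomial_absorption[of i m] binomial_absorb_comp[of m i] by simp
  thus ?thesis by (metis of_nat_mult)
qed

lemma seq_binom:
  fixes c :: "nat \<Rightarrow> real"
  assumes hrec: "\<And>j. j+2 \<le> d \<Longrightarrow> real (d-j) * c j = real (j+2) * c (j+2)" and dm: "d = 2*m"
  shows "2*i \<le> d \<Longrightarrow> c (2*i) = real (m choose i) * c 0"
proof (induction i)
  case 0 thus ?case by simp
next
  case (Suc i)
  hence le: "2*i+2 \<le> d" by simp
  have e: "real (d-2*i) * c (2*i) = real (2*i+2) * c (2*i+2)" using hrec[OF le] .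
  have d2: "real (d-2*i) = 2 * real (m - i)" using dm le by simp
  have ih: "c (2*i) = real (m choose i) * c 0" using Suc.IH le by simp
  have "real (2*i+2) * c (2*i+2) = real (d-2*i) * c (2*i)" using e by simp
  also have "\<dots> = 2 * real (m - i) * (real (m choose i) * c 0)" unfolding d2 ih ..
  also have "\<dots> = 2 * (real (m - i) * real (m choose i)) * c 0" by (simp only: mult_ac)
  also have "\<dots> = 2 * (real (Suc i) * real (m choose Suc i)) * c 0" by (simp only: binom_step)
  finally have "2 * real (Suc i) * c (2*i+2) = 2 * real (Suc i) * (real (m choose Suc i) * c 0)"
    by (simp add: algebra_simps)
  hence "c (2*i+2) = real (m choose Suc i) * c 0" by simp
  thus ?case by simp
qed

lemma rco_0: "rco n v 0 = - cc (Suc (Suc n)) v 1"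
  unfolding rco_def a1_def by simp
lemma rco_Suc: "j \<le> n \<Longrightarrow> rco n v (Suc j) = real (Suc (Suc n) - j) * cc (Suc (Suc n)) v j - real (j+2) * cc (Suc (Suc n)) v (j+2)"
  unfolding rco_def a1_def b1_def by simp
lemma rco_top: "rco n v (Suc (Suc n)) = cc (Suc (Suc n)) v (Suc n)"
  unfolding rco_def b1_def by simp
lemma cc_out: "d < k \<Longrightarrow> cc d v k = 0"
  unfolding cc_def by simp
lemma cc_zero_iff: "k \<le> d \<Longrightarrow> (cc d v k = 0 \<longleftrightarrow> v k = 0)"
  unfolding cc_def by simp

lemma R_forward:
  assumes R: "\<forall>x y. F (Suc (Suc n)) (rco n v) x y = 0" and W: "\<exists>h\<le>Suc (Suc n). v h \<noteq> 0"
  shows "even (Suc (Suc n)) \<and> v 0 \<noteq> 0 \<and>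
        (\<forall>h\<in>{1..Suc (Suc n) div 2}. v (2*h) = real ((Suc (Suc n) div 2) choose h) / real (Suc (Suc n) choose (2*h)) * v 0) \<and>
        (\<forall>h'\<in>{1..Suc (Suc n) div 2}. v (2*h' - 1) = 0)"
proof -
  define d where "d = Suc (Suc n)"
  define c where "c = cc d v"
  have r0: "\<forall>k\<le>d. rco n v k = 0" using R F_zero_iff unfolding d_def by blast
  have h1: "c 1 = 0" using r0 rco_0[of n v] unfolding c_def d_def by force
  have hrec: "real (d-j) * c j = real (j+2) * c (j+2)" if "j+2 \<le> d" for j
  proof -
    have "j \<le> n" "Suc j \<le> d" using that unfolding d_def by auto
    thus ?thesis using r0 rco_Suc[of j n v] unfolding c_def d_def by force
  qed
  have htop: "c (Suc n) = 0" using r0 rco_top[of n v] unfolding c_def d_def by force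
  have hout: "c k = 0" if "d < k" for k using cc_out that unfolding c_def by blast
  have codd: "c (2*i+1) = 0" for i using seq_odd[of c d, OF h1 hrec hout] by blast
  have c0: "c 0 \<noteq> 0"
  proof
    assume z: "c 0 = 0"
    have "c k = 0" for k
    proof (cases "d < k")
      case True thus ?thesis using hout by blast
    next
      case False
      show ?thesis
      proof (cases "even k")
        case True
        then obtain i where "k = 2*i" by blast
        thus ?thesis using seq_even0[of d c, OF hrec] z False by simp
      next
        case False
        then obtain i where "k = 2*i+1" using oddE by blast
        thus ?thesis using codd by simp
      qed
    qed
    hence "\<forall>h\<le>d. v h = 0" using cc_zero_iff unfolding c_def by blast
    thus False using W unfolding d_def by blast
  qed
  have ev: "even d"
  proof (rule ccontr)
    assume "odd d"
    hence "even (Suc n)" unfolding d_def by simp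
    then obtain i where "Suc n = 2*i" by (rule evenE)
    hence "c (2*i) = 0" using htop by simp
    moreover have "2*i \<le> d" using \<open>Suc n = 2*i\<close> unfolding d_def by simp
    ultimately show False using seq_even0[of d c, OF hrec] c0 by blast
  qed
  then obtain m where dm: "d = 2*m" by blast
  have v0: "v 0 \<noteq> 0" using c0 unfolding c_def cc_def by simp
  have rad: "v (2*h) = real (m choose h) / real (d choose (2*h)) * v 0" if "h \<in> {1..m}" for h
  proof -
    have le: "2*h \<le> d" using that dm by simp
    have "c (2*h) = real (m choose h) * c 0" using seq_binom[of d c m, OF hrec dm le] .
    hence "v (2*h) * real (d choose (2*h)) = real (m choose h) * v 0"
      unfolding c_def cc_def by simp
    moreover have "real (d choose (2*h)) \<noteq> 0" using le by simp
    ultimately show ?thesis by (simp add: field_simps)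
  qed
  have oddz: "v (2*h' - 1) = 0" if "h' \<in> {1..m}" for h'
  proof -
    have e: "2*h' - 1 = 2*(h'-1)+1" using that by (cases h') auto
    have le: "2*h' - 1 \<le> d" using that dm by auto
    have "c (2*h' - 1) = 0" unfolding e using codd .
    thus ?thesis using cc_zero_iff[OF le] unfolding c_def by blast
  qed
  have md: "Suc (Suc n) div 2 = m" using dm unfolding d_def by simp
  show ?thesis using ev v0 rad oddz unfolding md unfolding d_def by blast
qed

lemma R_backward:
  assumes ev: "even (Suc (Suc n))"
    and rad: "\<forall>h\<in>{1..Suc (Suc n) div 2}. v (2*h) = real ((Suc (Suc n) div 2) choose h) / real (Suc (Suc n) choose (2*h)) * v 0"
    and oddz: "\<forall>h'\<in>{1..Suc (Suc n) div 2}. v (2*h' - 1) = 0"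
  shows "\<forall>x y. F (Suc (Suc n)) (rco n v) x y = 0"
proof -
  define d where "d = Suc (Suc n)"
  define c where "c = cc d v"
  obtain m where dm: "d = 2*m" using ev unfolding d_def by blast
  have md: "Suc (Suc n) div 2 = m" using dm unfolding d_def by simp
  have ceven: "c (2*h) = real (m choose h) * v 0" if "h \<le> m" for h
  proof (cases "h = 0")
    case True thus ?thesis unfolding c_def cc_def by simp
  next
    case False
    hence "h \<in> {1..m}" using that by simp
    hence "v (2*h) = real (m choose h) / real (d choose (2*h)) * v 0" using rad unfolding md d_def by blast
    moreover have "real (d choose (2*h)) \<noteq> 0" using that dm by simp
    ultimately show ?thesis unfolding c_def cc_def by (simp add: field_simps)
  qed
  have codd: "c (2*i+1) = 0" for i
  proof (cases "2*i+1 \<le> d")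
    case True
    hence "Suc i \<in> {1..m}" using dm by simp
    hence "v (2*Suc i - 1) = 0" using oddz unfolding md by blast
    thus ?thesis unfolding c_def cc_def by simp
  next
    case False thus ?thesis unfolding c_def using cc_out by simp
  qed
  have "rco n v k = 0" if "k \<le> d" for k
  proof (cases k)
    case 0 thus ?thesis using rco_0[of n v] codd[of 0] unfolding c_def d_def by simp
  next
    case (Suc j)
    show ?thesis
    proof (cases "j \<le> n")
      case False
      hence "j = Suc n" using that Suc unfolding d_def by simp
      moreover have "c (Suc n) = 0"
      proof -
        have "Suc n = 2*(m-1)+1" using dm unfolding d_def by simp
        thus ?thesis using codd by metis
      qed
      ultimately show ?thesis using rco_top[of n v] Suc unfolding c_def d_def by simp
    next
      case True
      have rj: "rco n v k = real (d - j) * c j - real (j+2) * c (j+2)"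
        using rco_Suc[OF True, of v] Suc unfolding c_def d_def by simp
      show ?thesis
      proof (cases "even j")
        case True
        then obtain i where ji: "j = 2*i" by blast
        have il: "i+1 \<le> m" using \<open>j \<le> n\<close> ji dm unfolding d_def by simp
        have "c j = real (m choose i) * v 0" using ceven[of i] il ji by simp
        moreover have "c (j+2) = real (m choose Suc i) * v 0" using ceven[of "Suc i"] il ji
          by (simp add: mult_2 add.commute)
        moreover have "real (d - j) = 2 * real (m - i)" using ji dm il by simp
        ultimately have "rco n v k = 2 * (real (m - i) * real (m choose i)) * v 0 - 2 * (real (Suc i) * real (m choose Suc i)) * v 0"
          unfolding rj ji by (simp add: algebra_simps)
        thus ?thesis by (simp only: binom_step)
      next
        case False
        then obtain i where ji: "j = 2*i+1" using oddE by blast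
        have "c (j+2) = 0" using codd[of "i+1"] ji by (simp add: algebra_simps)
        thus ?thesis using rj codd[of i] ji by simp
      qed
    qed
  qed
  thus ?thesis unfolding F_zero_iff d_def by blast
qed

lemma F1_eval: "F (Suc 0) a x y = a 0 * y + a 1 * x"
  unfolding F_def by (simp add: atMost_Suc)
lemma F2_eval: "F (Suc (Suc 0)) a x y = a 0 * y^2 + a 1 * x * y + a 2 * x^2"
  unfolding F_def by (simp add: atMost_Suc numeral_2_eq_2 power2_eq_square)

lemma B3: "Bexp 1 v \<beta> \<beta>' x y = 3*y^2*(\<beta>*(7 * v 1) + \<beta>'*(-5 * v 0 + 2 * v 2))
   + 6*x*y*(\<beta>*(- v 0 + 6 * v 2) + \<beta>'*(-6 * v 1 + v 3))
   + 3*x^2*(\<beta>*(-2 * v 1 + 5 * v 3) + \<beta>'*(-7 * v 2))"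
proof -
  have c: "real (3 choose 0) = 1" "real (3 choose 1) = 3" "real (3 choose 2) = 3" "real (3 choose 3) = 1"
    by (simp_all add: numeral_3_eq_3 numeral_2_eq_2)
  show ?thesis
    unfolding Bexp_def
    by (simp add: F1_eval F2_eval a22_def a11_def a12_def a1_def b1_def cc_def c numeral_3_eq_3 numeral_2_eq_2 algebra_simps power2_eq_square)
qed

lemma GL3: "Gexp 1 v \<gamma> \<gamma>' x y + Lexp \<beta> \<beta>' x y =
   y*(6*(\<gamma>*(v 0 - v 2) + \<gamma>'*(2 * v 1)) - 3*\<beta>') + x*(6*(\<gamma>*(v 1 - v 3) + \<gamma>'*(2 * v 2)) + 3*\<beta>)"
  unfolding G_F Lexp_def by (simp add: F1_eval Kf_def numeral_3_eq_3 numeral_2_eq_2 algebra_simps)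

lemma B3_zero: "(\<forall>x y. Bexp 1 v \<beta> \<beta>' x y = 0) \<longleftrightarrow> (\<forall>p\<in>set (M3cols v). \<beta> * fst p + \<beta>' * snd p = 0)"
proof
  assume h: "\<forall>x y. Bexp 1 v \<beta> \<beta>' x y = 0"
  have e1: "\<beta>*(7 * v 1) + \<beta>'*(-5 * v 0 + 2 * v 2) = 0" using h[rule_format, of 0 1] unfolding B3 by simp
  have e3: "\<beta>*(-2 * v 1 + 5 * v 3) + \<beta>'*(-7 * v 2) = 0" using h[rule_format, of 1 0] unfolding B3 by simp
  have e2: "\<beta>*(- v 0 + 6 * v 2) + \<beta>'*(-6 * v 1 + v 3) = 0" using h[rule_format, of 1 1] e1 e3 unfolding B3 by simp
  show "\<forall>p\<in>set (M3cols v). \<beta> * fst p + \<beta>' * snd p = 0"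
    unfolding M3cols_def using e1 e2 e3 by (simp add: algebra_simps)
next
  assume h: "\<forall>p\<in>set (M3cols v). \<beta> * fst p + \<beta>' * snd p = 0"
  have e1: "\<beta>*(7 * v 1) + \<beta>'*(-5 * v 0 + 2 * v 2) = 0"
   and e2: "\<beta>*(- v 0 + 6 * v 2) + \<beta>'*(-6 * v 1 + v 3) = 0"
   and e3: "\<beta>*(-2 * v 1 + 5 * v 3) + \<beta>'*(-7 * v 2) = 0"
    using h unfolding M3cols_def by (simp_all add: algebra_simps)
  show "\<forall>x y. Bexp 1 v \<beta> \<beta>' x y = 0" unfolding B3 e1 e2 e3 by simp
qed

lemma GL3_zero: "(\<forall>x y. Gexp 1 v \<gamma> \<gamma>' x y + Lexp \<beta> \<beta>' x y = 0) \<longleftrightarrow>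
   (6*(\<gamma>*(v 0 - v 2) + \<gamma>'*(2 * v 1)) = 3*\<beta>' \<and> 6*(\<gamma>*(v 1 - v 3) + \<gamma>'*(2 * v 2)) = -3*\<beta>)"
proof
  assume h: "\<forall>x y. Gexp 1 v \<gamma> \<gamma>' x y + Lexp \<beta> \<beta>' x y = 0"
  show "6*(\<gamma>*(v 0 - v 2) + \<gamma>'*(2 * v 1)) = 3*\<beta>' \<and> 6*(\<gamma>*(v 1 - v 3) + \<gamma>'*(2 * v 2)) = -3*\<beta>"
    using h[rule_format, of 0 1] h[rule_format, of 1 0] unfolding GL3 by simp
next
  assume "6*(\<gamma>*(v 0 - v 2) + \<gamma>'*(2 * v 1)) = 3*\<beta>' \<and> 6*(\<gamma>*(v 1 - v 3) + \<gamma>'*(2 * v 2)) = -3*\<beta>"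
  thus "\<forall>x y. Gexp 1 v \<gamma> \<gamma>' x y + Lexp \<beta> \<beta>' x y = 0" unfolding GL3 by simp
qed

lemma Mcols_set: "(\<forall>p\<in>set (Mcols (Suc (Suc n)) v). u1 * fst p + u2 * snd p = 0) \<longleftrightarrow>
   (\<forall>h\<le>n. u1*(v h - v (h+2)) + u2*(2 * v (h+1)) = 0)"
  unfolding Mcols_def by (auto simp: less_Suc_eq_le)

lemma Mcols_nz:
  assumes n: "n \<ge> 1" and W: "\<exists>h\<le>Suc (Suc n). v h \<noteq> 0"
  shows "\<exists>p\<in>set (Mcols (Suc (Suc n)) v). p \<noteq> 0"
proof (rule ccontr)
  assume "\<not> (\<exists>p\<in>set (Mcols (Suc (Suc n)) v). p \<noteq> 0)"
  hence z: "\<forall>h\<le>n. v h - v (h+2) = 0 \<and> 2 * v (h+1) = 0"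
    unfolding Mcols_def by (auto simp: less_Suc_eq_le zero_prod_def)
  have "v h = 0" if "h \<le> Suc (Suc n)" for h
  proof -
    have "h = 0 \<or> (1 \<le> h \<and> h \<le> Suc n) \<or> h = Suc (Suc n)" using that by linarith
    then consider "h = 0" | "1 \<le> h \<and> h \<le> Suc n" | "h = Suc (Suc n)" by blast
    thus ?thesis
    proof cases
      case 1
      have "v 2 = 0" using z[rule_format, of 1] n by (simp add: numeral_2_eq_2)
      thus ?thesis using z[rule_format, of 0] 1 by (simp add: numeral_2_eq_2)
    next
      case 2
      hence "h - 1 \<le> n" by arith
      thus ?thesis using z[rule_format, of "h-1"] 2 by simp
    next
      case 3
      have "v n = 0" using z[rule_format, of "n-1"] n by simp
      thus ?thesis using z[rule_format, of n] 3 by simp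
    qed
  qed
  thus False using W by blast
qed

lemma M3_nz:
  assumes W: "\<exists>h\<le>3. v h \<noteq> 0"
  shows "\<exists>p\<in>set (M3cols v). p \<noteq> 0"
proof (rule ccontr)
  assume "\<not> (\<exists>p\<in>set (M3cols v). p \<noteq> 0)"
  hence "7 * v 1 = 0" "-5 * v 0 + 2 * v 2 = 0" "- v 0 + 6 * v 2 = 0" "-2 * v 1 + 5 * v 3 = 0"
    unfolding M3cols_def by (auto simp: zero_prod_def)
  hence "v 0 = 0" "v 1 = 0" "v 2 = 0" "v 3 = 0" by linarith+
  moreover obtain h where "h \<le> 3" "v h \<noteq> 0" using W by blast
  moreover have "h = 0 \<or> h = 1 \<or> h = 2 \<or> h = 3" using \<open>h \<le> 3\<close> by auto
  ultimately show False by auto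
qed

lemma A_zero_iff:
  "(\<forall>x y. Aexp n v \<alpha> x y = 0) \<longleftrightarrow> (\<alpha> = 0 \<or> (\<forall>x y. F (Suc (Suc n)) (rco n v) x y = 0))"
proof -
  have nz: "-2 * (real n + 4) \<noteq> 0" by simp
  show ?thesis unfolding A_R using nz by auto
qed

lemma L_zero_iff: "(\<forall>x y. Lexp \<beta> \<beta>' x y = 0) \<longleftrightarrow> \<beta> = 0 \<and> \<beta>' = 0"
proof
  assume h: "\<forall>x y. Lexp \<beta> \<beta>' x y = 0"
  show "\<beta> = 0 \<and> \<beta>' = 0" using h[rule_format, of 1 0] h[rule_format, of 0 1] unfolding Lexp_def by simp
qed (simp add: Lexp_def)

lemma B_zero0: "Bexp n v 0 0 x y = 0"
  unfolding Bexp_def by simp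

theorem mainTheorem2:
  fixes d :: nat and v :: "nat \<Rightarrow> real"
  assumes "d \<ge> 3"
    and "\<exists>q1 q2. hom_pot d v q1 q2 \<noteq> 0"
  defines "V \<equiv> full_pot d v"
  shows "(\<exists>\<alpha> \<beta> \<beta>' \<gamma> \<gamma>' :: real. (\<alpha>, \<beta>, \<beta>', \<gamma>, \<gamma>') \<noteq> (0, 0, 0, 0, 0) \<and>
     (\<forall>q1 q2.
        (d2 (d2 V) q1 q2 - d1 (d1 V) q1 q2) * (-2*\<alpha>*q1*q2 - \<beta>'*q2 - \<beta>*q1 + \<gamma>)
        + 2 * d2 (d1 V) q1 q2 * (\<alpha>*q2^2 - \<alpha>*q1^2 + \<beta>*q2 - \<beta>'*q1 + \<gamma>')
        + d1 V q1 q2 * (6*\<alpha>*q2 + 3*\<beta>) - d2 V q1 q2 * (6*\<alpha>*q1 + 3*\<beta>') = 0))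
   \<longleftrightarrow>
   ((odd d \<and> d \<ge> 5 \<longrightarrow> rank2 (Mcols d v) = 1) \<and>
    (even d \<and> d \<ge> 4 \<longrightarrow>
       rank2 (Mcols d v) = 1 \<or>
       (v 0 \<noteq> 0 \<and>
        (\<forall>h\<in>{1..d div 2}. v (2*h) = real ((d div 2) choose h) / real (d choose (2*h)) * v 0) \<and>
        (\<forall>h'\<in>{1..d div 2}. v (2*h' - 1) = 0))) \<and>
    (d = 3 \<longrightarrow> rank2 (Mcols 3 v) = 1 \<or> rank2 (M3cols v) = 1))"
proof -
  define n where "n = d - 2"
  have dn: "d = Suc (Suc n)" and n1: "n \<ge> 1" using assms(1) unfolding n_def by arith+
  have W: "\<exists>h\<le>d. v h \<noteq> 0"
  proof (rule ccontr)
    assume "\<not> (\<exists>h\<le>d. v h \<noteq> 0)"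
    hence "\<forall>h\<le>d. v h = 0" by auto
    hence "\<forall>q1 q2. hom_pot d v q1 q2 = 0" unfolding hom_pot_def by simp
    thus False using assms(2) by blast
  qed
  have E: "(\<forall>q1 q2.
        (d2 (d2 V) q1 q2 - d1 (d1 V) q1 q2) * (-2*\<alpha>*q1*q2 - \<beta>'*q2 - \<beta>*q1 + \<gamma>)
        + 2 * d2 (d1 V) q1 q2 * (\<alpha>*q2^2 - \<alpha>*q1^2 + \<beta>*q2 - \<beta>'*q1 + \<gamma>')
        + d1 V q1 q2 * (6*\<alpha>*q2 + 3*\<beta>) - d2 V q1 q2 * (6*\<alpha>*q1 + 3*\<beta>') = 0)
    \<longleftrightarrow> (\<forall>x y. Aexp n v \<alpha> x y + Bexp n v \<beta> \<beta>' x y + Gexp n v \<gamma> \<gamma>' x y + Lexp \<beta> \<beta>' x y = 0)"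
    for \<alpha> \<beta> \<beta>' \<gamma> \<gamma>' :: real
    unfolding V_def dn E_split by (rule refl)
  define Rz where "Rz \<longleftrightarrow> (\<forall>x y. F (Suc (Suc n)) (rco n v) x y = 0)"
  define Rad where "Rad \<longleftrightarrow> (v 0 \<noteq> 0 \<and>
        (\<forall>h\<in>{1..d div 2}. v (2*h) = real ((d div 2) choose h) / real (d choose (2*h)) * v 0) \<and>
        (\<forall>h'\<in>{1..d div 2}. v (2*h' - 1) = 0))"
  have Rz_iff: "Rz \<longleftrightarrow> even d \<and> Rad"
  proof
    assume "Rz"
    thus "even d \<and> Rad" using R_forward[of n v] W unfolding Rz_def Rad_def dn by blast
  next
    assume "even d \<and> Rad"
    thus "Rz" using R_backward[of n v] unfolding Rz_def Rad_def dn by blast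
  qed
  define cok where "cok u1 u2 \<longleftrightarrow> (\<forall>h\<le>n. u1*(v h - v (h+2)) + u2*(2 * v (h+1)) = 0)" for u1 u2 :: real
  have rankM: "rank2 (Mcols d v) = 1 \<longleftrightarrow> (\<exists>u1 u2. (u1, u2) \<noteq> (0, 0) \<and> cok u1 u2)"
    unfolding rank2_one dn Mcols_set cok_def using Mcols_nz[OF n1, of v] W unfolding dn by blast
  show ?thesis
  proof (cases "n = 1")
    case False
    hence n2: "n \<ge> 2" using n1 by simp
    have step: "(\<forall>x y. Aexp n v \<alpha> x y + Bexp n v \<beta> \<beta>' x y + Gexp n v \<gamma> \<gamma>' x y + Lexp \<beta> \<beta>' x y = 0)
       \<longleftrightarrow> (\<alpha> = 0 \<or> Rz) \<and> \<beta> = 0 \<and> \<beta>' = 0 \<and> cok \<gamma> \<gamma>'" for \<alpha> \<beta> \<beta>' \<gamma> \<gamma>' :: real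
      unfolding E_zero_iff[OF n1] A_zero_iff L_zero_iff G_zero_iff Rz_def[symmetric] cok_def[symmetric]
      using False B_zero0[of n v] by auto
    have LHS: "(\<exists>(\<alpha>::real) (\<beta>::real) (\<beta>'::real) (\<gamma>::real) (\<gamma>'::real). (\<alpha>, \<beta>, \<beta>', \<gamma>, \<gamma>') \<noteq> (0, 0, 0, 0, 0) \<and>
        (\<forall>x y. Aexp n v \<alpha> x y + Bexp n v \<beta> \<beta>' x y + Gexp n v \<gamma> \<gamma>' x y + Lexp \<beta> \<beta>' x y = 0))
       \<longleftrightarrow> Rz \<or> rank2 (Mcols d v) = 1"
      unfolding step rankM
    proof
      assume "\<exists>(\<alpha>::real) (\<beta>::real) (\<beta>'::real) (\<gamma>::real) (\<gamma>'::real). (\<alpha>, \<beta>, \<beta>', \<gamma>, \<gamma>') \<noteq> (0, 0, 0, 0, 0) \<and> (\<alpha> = 0 \<or> Rz) \<and> \<beta> = 0 \<and> \<beta>' = 0 \<and> cok \<gamma> \<gamma>'"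
      then obtain \<alpha> \<beta> \<beta>' \<gamma> \<gamma>' :: real where h: "(\<alpha>, \<beta>, \<beta>', \<gamma>, \<gamma>') \<noteq> (0, 0, 0, 0, 0)" "\<alpha> = 0 \<or> Rz" "\<beta> = 0" "\<beta>' = 0" "cok \<gamma> \<gamma>'"
        by blast
      show "Rz \<or> (\<exists>u1 u2. (u1, u2) \<noteq> (0, 0) \<and> cok u1 u2)"
      proof (cases "\<alpha> = 0")
        case True
        hence "(\<gamma>, \<gamma>') \<noteq> (0, 0)" using h by auto
        thus ?thesis using h by blast
      next
        case False thus ?thesis using h by blast
      qed
    next
      assume "Rz \<or> (\<exists>u1 u2. (u1, u2) \<noteq> (0, 0) \<and> cok u1 u2)"
      thus "\<exists>(\<alpha>::real) (\<beta>::real) (\<beta>'::real) (\<gamma>::real) (\<gamma>'::real). (\<alpha>, \<beta>, \<beta>', \<gamma>, \<gamma>') \<noteq> (0, 0, 0, 0, 0) \<and> (\<alpha> = 0 \<or> Rz) \<and> \<beta> = 0 \<and> \<beta>' = 0 \<and> cok \<gamma> \<gamma>'"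
      proof
        assume rz: "Rz"
        have ck: "cok 0 0" unfolding cok_def by simp
        show ?thesis
                    apply (rule_tac x=1 in exI)
          apply (rule_tac x=0 in exI)
          apply (rule_tac x=0 in exI)
          apply (rule_tac x=0 in exI)
          apply (rule_tac x=0 in exI)
          by (use rz ck in simp)
      next
        assume "\<exists>u1 u2. (u1, u2) \<noteq> (0, 0) \<and> cok u1 u2"
        then obtain u1 u2 where u: "(u1, u2) \<noteq> (0, 0)" "cok u1 u2" by blast
        show ?thesis           apply (rule_tac x=0 in exI)
          apply (rule_tac x=0 in exI)
          apply (rule_tac x=0 in exI)
          apply (rule_tac x=u1 in exI)
          apply (rule_tac x=u2 in exI)
          by (use u in auto)
      qed
    qed
    have d4: "d \<ge> 4" "d \<noteq> 3" using n2 dn by auto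
    have d5: "odd d \<longrightarrow> d \<ge> 5" using d4 by (cases "d = 4") auto
    show ?thesis unfolding E LHS Rz_iff Rad_def[symmetric] using d4 d5 by auto
  next
    case True
    hence d3: "d = 3" using dn by simp
    have nRz: "\<not> Rz" using Rz_iff d3 by simp
    have step: "(\<forall>x y. Aexp n v \<alpha> x y + Bexp n v \<beta> \<beta>' x y + Gexp n v \<gamma> \<gamma>' x y + Lexp \<beta> \<beta>' x y = 0)
       \<longleftrightarrow> \<alpha> = 0 \<and> (\<forall>p\<in>set (M3cols v). \<beta> * fst p + \<beta>' * snd p = 0) \<and>
           (6*(\<gamma>*(v 0 - v 2) + \<gamma>'*(2 * v 1)) = 3*\<beta>' \<and> 6*(\<gamma>*(v 1 - v 3) + \<gamma>'*(2 * v 2)) = -3*\<beta>)"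
      for \<alpha> \<beta> \<beta>' \<gamma> \<gamma>' :: real
      unfolding E_zero_iff[OF n1] A_zero_iff Rz_def[symmetric] using nRz True B3_zero GL3_zero by simp
    have cok1: "cok u1 u2 \<longleftrightarrow> u1*(v 0 - v 2) + u2*(2 * v 1) = 0 \<and> u1*(v 1 - v 3) + u2*(2 * v 2) = 0" for u1 u2
      unfolding cok_def True by (auto simp: le_Suc_eq numeral_2_eq_2 numeral_3_eq_3)
    have M3nz: "\<exists>p\<in>set (M3cols v). p \<noteq> 0" using M3_nz W d3 by simp
    have rankM3: "rank2 (M3cols v) = 1 \<longleftrightarrow> (\<exists>u1 u2. (u1, u2) \<noteq> (0, 0) \<and> (\<forall>p\<in>set (M3cols v). u1 * fst p + u2 * snd p = 0))"
      unfolding rank2_one using M3nz by blast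
    have LHS: "(\<exists>(\<alpha>::real) (\<beta>::real) (\<beta>'::real) (\<gamma>::real) (\<gamma>'::real). (\<alpha>, \<beta>, \<beta>', \<gamma>, \<gamma>') \<noteq> (0, 0, 0, 0, 0) \<and>
        (\<forall>x y. Aexp n v \<alpha> x y + Bexp n v \<beta> \<beta>' x y + Gexp n v \<gamma> \<gamma>' x y + Lexp \<beta> \<beta>' x y = 0))
       \<longleftrightarrow> rank2 (Mcols d v) = 1 \<or> rank2 (M3cols v) = 1"
      unfolding step rankM rankM3
    proof
      assume "\<exists>(\<alpha>::real) (\<beta>::real) (\<beta>'::real) (\<gamma>::real) (\<gamma>'::real). (\<alpha>, \<beta>, \<beta>', \<gamma>, \<gamma>') \<noteq> (0, 0, 0, 0, 0) \<and> \<alpha> = 0 \<and> (\<forall>p\<in>set (M3cols v). \<beta> * fst p + \<beta>' * snd p = 0) \<and>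
           (6*(\<gamma>*(v 0 - v 2) + \<gamma>'*(2 * v 1)) = 3*\<beta>' \<and> 6*(\<gamma>*(v 1 - v 3) + \<gamma>'*(2 * v 2)) = -3*\<beta>)"
      then obtain \<alpha> \<beta> \<beta>' \<gamma> \<gamma>' :: real where h: "(\<alpha>, \<beta>, \<beta>', \<gamma>, \<gamma>') \<noteq> (0, 0, 0, 0, 0)" "\<alpha> = 0"
        "\<forall>p\<in>set (M3cols v). \<beta> * fst p + \<beta>' * snd p = 0"
        "6*(\<gamma>*(v 0 - v 2) + \<gamma>'*(2 * v 1)) = 3*\<beta>'" "6*(\<gamma>*(v 1 - v 3) + \<gamma>'*(2 * v 2)) = -3*\<beta>"
        by blast
      show "(\<exists>u1 u2. (u1, u2) \<noteq> (0, 0) \<and> cok u1 u2) \<or>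
            (\<exists>u1 u2. (u1, u2) \<noteq> (0, 0) \<and> (\<forall>p\<in>set (M3cols v). u1 * fst p + u2 * snd p = 0))"
      proof (cases "\<beta> = 0 \<and> \<beta>' = 0")
        case True
        hence "(\<gamma>, \<gamma>') \<noteq> (0, 0)" using h by auto
        moreover have "cok \<gamma> \<gamma>'" unfolding cok1 using h True by simp
        ultimately show ?thesis by blast
      next
        case False
        hence "(\<beta>, \<beta>') \<noteq> (0, 0)" by auto
        thus ?thesis using h(3) by blast
      qed
    next
      assume "(\<exists>u1 u2. (u1, u2) \<noteq> (0, 0) \<and> cok u1 u2) \<or>
            (\<exists>u1 u2. (u1, u2) \<noteq> (0, 0) \<and> (\<forall>p\<in>set (M3cols v). u1 * fst p + u2 * snd p = 0))"
      thus "\<exists>(\<alpha>::real) (\<beta>::real) (\<beta>'::real) (\<gamma>::real) (\<gamma>'::real). (\<alpha>, \<beta>, \<beta>', \<gamma>, \<gamma>') \<noteq> (0, 0, 0, 0, 0) \<and> \<alpha> = 0 \<and> (\<forall>p\<in>set (M3cols v). \<beta> * fst p + \<beta>' * snd p = 0) \<and>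
           (6*(\<gamma>*(v 0 - v 2) + \<gamma>'*(2 * v 1)) = 3*\<beta>' \<and> 6*(\<gamma>*(v 1 - v 3) + \<gamma>'*(2 * v 2)) = -3*\<beta>)"
      proof (cases "\<exists>u1 u2. (u1, u2) \<noteq> (0, 0) \<and> cok u1 u2")
        case True
        then obtain u1 u2 where u: "(u1, u2) \<noteq> (0, 0)" "cok u1 u2" by blast
        show ?thesis
                    apply (rule_tac x=0 in exI)
          apply (rule_tac x=0 in exI)
          apply (rule_tac x=0 in exI)
          apply (rule_tac x=u1 in exI)
          apply (rule_tac x=u2 in exI)
          by (use u cok1 in auto)
      next
        case False
        with \<open>(\<exists>u1 u2. (u1, u2) \<noteq> (0, 0) \<and> cok u1 u2) \<or> _\<close>
        obtain b b' where bb: "(b, b') \<noteq> (0, 0)" "\<forall>p\<in>set (M3cols v). b * fst p + b' * snd p = 0" by blast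
        define a where "a = v 0 - v 2"
        define b0 where "b0 = 2 * v 1"
        define c where "c = v 1 - v 3"
        define e where "e = 2 * v 2"
        define D where "D = a * e - b0 * c"
        have D: "D \<noteq> 0"
        proof
          assume D0: "D = 0"
          have "\<exists>w1 w2. (w1, w2) \<noteq> (0, 0) \<and> w1 * a + w2 * b0 = 0 \<and> w1 * c + w2 * e = 0"
          proof (cases "(a, b0) \<noteq> (0, 0)")
            case True
            show ?thesis           apply (rule_tac x=b0 in exI)
          apply (rule_tac x="-a" in exI)
          by (use True D0 in \<open>auto simp: D_def algebra_simps\<close>)
          next
            case F1: False
            show ?thesis
            proof (cases "(c, e) \<noteq> (0, 0)")
              case True
              show ?thesis           apply (rule_tac x=e in exI)
          apply (rule_tac x="-c" in exI)
          by (use True F1 in \<open>auto simp: algebra_simps\<close>)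
            next
              case False
              show ?thesis           apply (rule_tac x=1 in exI)
          apply (rule_tac x=0 in exI)
          by (use False F1 in auto)
            qed
          qed
          then obtain w1 w2 where "(w1, w2) \<noteq> (0, 0)" "cok w1 w2"
            unfolding cok1 a_def b0_def c_def e_def by (auto simp: algebra_simps)
          thus False using \<open>\<not> (\<exists>u1 u2. (u1, u2) \<noteq> (0, 0) \<and> cok u1 u2)\<close> by blast
        qed
        define g where "g = ((b'/2) * e - b0 * (-b/2)) / D"
        define g' where "g' = (a * (-b/2) - (b'/2) * c) / D"
        have gD: "g * D = (b'/2) * e - b0 * (-b/2)" using D unfolding g_def by simp
        have g'D: "g' * D = a * (-b/2) - (b'/2) * c" using D unfolding g'_def by simp
        have "(g * a + g' * b0) * D = a * (g * D) + b0 * (g' * D)" by (simp add: algebra_simps)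
        also have "\<dots> = (b'/2) * D" by (simp only: gD g'D) (simp add: D_def algebra_simps)
        finally have s1: "g * a + g' * b0 = b'/2" using D by simp
        have "(g * c + g' * e) * D = c * (g * D) + e * (g' * D)" by (simp add: algebra_simps)
        also have "\<dots> = (-b/2) * D" by (simp only: gD g'D) (simp add: D_def algebra_simps)
        finally have s2: "g * c + g' * e = -b/2" by (metis D mult_right_cancel)
        show ?thesis
                    apply (rule_tac x=0 in exI)
          apply (rule_tac x=b in exI)
          apply (rule_tac x="b'" in exI)
          apply (rule_tac x=g in exI)
          apply (rule_tac x="g'" in exI)
          by (use bb s1 s2 in \<open>auto simp: a_def b0_def c_def e_def algebra_simps\<close>)
      qed
    qed
    show ?thesis unfolding E LHS using d3 by auto
  qed
qed

end
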